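(* Let $T$ be a tree of order $n \geq 4$, and let $u$ and $v$ be two distinct vertices of $T$ which are non-adjacent in $\Lambda(T)$. Then exactly one of the following cases occurs: (1) $u$ and $v$ are two leaves of $T$, both adjacent to a common third vertex of $T$; (2) $u$ and $v$ are adjacent in $T$, and every vertex of $T$ other than $u$ and $v$ is a leaf adjacent to exactly one of $u$ and $v$; (3) $u$ and $v$ are at distance $3$ in $T$, joined by the path $u - w - x - v$, and every vertex of $T$ other than $u, w, x, v$ is a leaf adjacent to exactly one of $u$ and $v$.
   Context: All graphs are simple and finite. For a graph $G$ and disjoint $X, Y \subseteq V(G)$, $E(X,Y)$ denotes the set of edges with one endpoint in $X$ and the other in $Y$. An ordered pair $(X,Y)$ of disjoint subsets of $V(G)$ with $|X|=|Y|=2$ is an odd pair of $G$ if $|E(X,Y)|$ is odd. A $2$-subset $\{u,v\}\subseteq V(G)$ is an odd set if it is the first component of some odd pair of $G$. The graph $\Lambda(G)$ has vertex set $V(G)$, and $uv$ is an edge of $\Lambda(G)$ iff $\{u,v\}$ is an odd set of $G$. *)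

theory Defs
  imports Main
begin

definition simple_graph :: "'a set \<Rightarrow> ('a \<Rightarrow> 'a \<Rightarrow> bool) \<Rightarrow> bool" where
  "simple_graph V E \<longleftrightarrow> finite V \<and> (\<forall>u v. E u v \<longrightarrow> u \<in> V \<and> v \<in> V)
     \<and> (\<forall>u v. E u v \<longrightarrow> E v u) \<and> (\<forall>u. \<not> E u u)"

definition is_walk :: "'a set \<Rightarrow> ('a \<Rightarrow> 'a \<Rightarrow> bool) \<Rightarrow> 'a list \<Rightarrow> bool" where
  "is_walk V E p \<longleftrightarrow> p \<noteq> [] \<and> set p \<subseteq> V \<and> (\<forall>i. Suc i < length p \<longrightarrow> E (p ! i) (p ! Suc i))"

definition is_path :: "'a set \<Rightarrow> ('a \<Rightarrow> 'a \<Rightarrow> bool) \<Rightarrow> 'a list \<Rightarrow> bool" where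
  "is_path V E p \<longleftrightarrow> is_walk V E p \<and> distinct p"

definition connected_graph :: "'a set \<Rightarrow> ('a \<Rightarrow> 'a \<Rightarrow> bool) \<Rightarrow> bool" where
  "connected_graph V E \<longleftrightarrow> (\<forall>u\<in>V. \<forall>v\<in>V. \<exists>p. is_walk V E p \<and> hd p = u \<and> last p = v)"

definition is_cycle :: "'a set \<Rightarrow> ('a \<Rightarrow> 'a \<Rightarrow> bool) \<Rightarrow> 'a list \<Rightarrow> bool" where
  "is_cycle V E c \<longleftrightarrow> is_path V E c \<and> length c \<ge> 3 \<and> E (last c) (hd c)"

definition acyclic_graph :: "'a set \<Rightarrow> ('a \<Rightarrow> 'a \<Rightarrow> bool) \<Rightarrow> bool" where
  "acyclic_graph V E \<longleftrightarrow> (\<nexists>c. is_cycle V E c)"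

definition is_tree :: "'a set \<Rightarrow> ('a \<Rightarrow> 'a \<Rightarrow> bool) \<Rightarrow> bool" where
  "is_tree V E \<longleftrightarrow> simple_graph V E \<and> V \<noteq> {} \<and> connected_graph V E \<and> acyclic_graph V E"

definition gdist :: "'a set \<Rightarrow> ('a \<Rightarrow> 'a \<Rightarrow> bool) \<Rightarrow> 'a \<Rightarrow> 'a \<Rightarrow> nat" where
  "gdist V E u v = (LEAST k. \<exists>p. is_walk V E p \<and> hd p = u \<and> last p = v \<and> length p = Suc k)"

definition degree :: "'a set \<Rightarrow> ('a \<Rightarrow> 'a \<Rightarrow> bool) \<Rightarrow> 'a \<Rightarrow> nat" where
  "degree V E v = card {w \<in> V. E v w}"

definition is_leaf :: "'a set \<Rightarrow> ('a \<Rightarrow> 'a \<Rightarrow> bool) \<Rightarrow> 'a \<Rightarrow> bool" where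
  "is_leaf V E v \<longleftrightarrow> v \<in> V \<and> degree V E v = 1"

text \<open>E(X,Y): the edges with one endpoint in X and the other in Y (X, Y disjoint),
  counted as ordered pairs (x,y) with x in X and y in Y, which is in bijection with those edges.\<close>
definition edges_between :: "('a \<Rightarrow> 'a \<Rightarrow> bool) \<Rightarrow> 'a set \<Rightarrow> 'a set \<Rightarrow> ('a \<times> 'a) set" where
  "edges_between E X Y = {(x, y). x \<in> X \<and> y \<in> Y \<and> E x y}"

definition odd_pair :: "'a set \<Rightarrow> ('a \<Rightarrow> 'a \<Rightarrow> bool) \<Rightarrow> 'a set \<Rightarrow> 'a set \<Rightarrow> bool" where
  "odd_pair V E X Y \<longleftrightarrow> X \<subseteq> V \<and> Y \<subseteq> V \<and> X \<inter> Y = {} \<and> card X = 2 \<and> card Y = 2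
     \<and> odd (card (edges_between E X Y))"

definition odd_set :: "'a set \<Rightarrow> ('a \<Rightarrow> 'a \<Rightarrow> bool) \<Rightarrow> 'a set \<Rightarrow> bool" where
  "odd_set V E X \<longleftrightarrow> (\<exists>Y. odd_pair V E X Y)"

definition Lambda_adj :: "'a set \<Rightarrow> ('a \<Rightarrow> 'a \<Rightarrow> bool) \<Rightarrow> 'a \<Rightarrow> 'a \<Rightarrow> bool" where
  "Lambda_adj V E u v \<longleftrightarrow> u \<in> V \<and> v \<in> V \<and> u \<noteq> v \<and> odd_set V E {u, v}"

end

theory Submission
  imports Defs
begin

lemma walk_Cons2: "is_walk V E (x#y#p) \<longleftrightarrow> x \<in> V \<and> E x y \<and> is_walk V E (y#p)"
proof
  assume h: "is_walk V E (x#y#p)"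
  have hh: "\<And>i. Suc i < length (x#y#p) \<Longrightarrow> E ((x#y#p) ! i) ((x#y#p) ! Suc i)"
    using h unfolding is_walk_def by blast
  have "E ((x#y#p) ! 0) ((x#y#p) ! Suc 0)" by (rule hh) simp
  then have "E x y" by simp
  moreover have "\<forall>i. Suc i < length (y#p) \<longrightarrow> E ((y#p) ! i) ((y#p) ! Suc i)"
  proof (intro allI impI)
    fix i assume "Suc i < length (y#p)"
    then have "Suc (Suc i) < length (x#y#p)" by simp
    then have "E ((x#y#p) ! Suc i) ((x#y#p) ! Suc (Suc i))" by (rule hh)
    then show "E ((y#p) ! i) ((y#p) ! Suc i)" by simp
  qed
  moreover have "x \<in> V" "set (y#p) \<subseteq> V" using h unfolding is_walk_def by auto
  ultimately show "x \<in> V \<and> E x y \<and> is_walk V E (y#p)" unfolding is_walk_def by blast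
next
  assume h: "x \<in> V \<and> E x y \<and> is_walk V E (y#p)"
  have hh: "\<And>i. Suc i < length (y#p) \<Longrightarrow> E ((y#p) ! i) ((y#p) ! Suc i)"
    using h unfolding is_walk_def by blast
  have "\<forall>i. Suc i < length (x#y#p) \<longrightarrow> E ((x#y#p) ! i) ((x#y#p) ! Suc i)"
  proof (intro allI impI)
    fix i assume a: "Suc i < length (x#y#p)"
    show "E ((x#y#p) ! i) ((x#y#p) ! Suc i)"
    proof (cases i)
      case 0 then show ?thesis using h by simp
    next
      case (Suc j)
      then have "Suc j < length (y#p)" using a by simp
      then have "E ((y#p) ! j) ((y#p) ! Suc j)" by (rule hh)
      then show ?thesis using Suc by simp
    qed
  qed
  moreover have "set (x#y#p) \<subseteq> V" using h unfolding is_walk_def by auto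
  ultimately show "is_walk V E (x#y#p)" unfolding is_walk_def by blast
qed

lemma walk_single: "is_walk V E [x] \<longleftrightarrow> x \<in> V"
  unfolding is_walk_def by auto

lemma walk_closed:
  assumes "\<And>x y. x \<in> S \<Longrightarrow> E x y \<Longrightarrow> y \<in> S"
  shows "is_walk V E p \<Longrightarrow> hd p \<in> S \<Longrightarrow> last p \<in> S"
proof (induction p)
  case Nil then show ?case by (simp add: is_walk_def)
next
  case (Cons a q)
  show ?case
  proof (cases q)
    case Nil then show ?thesis using Cons by simp
  next
    case (Cons b r)
    then have "E a b" "is_walk V E q" using Cons.prems by (auto simp: walk_Cons2)
    then have "b \<in> S" using assms Cons.prems by auto
    then show ?thesis using Cons.IH \<open>is_walk V E q\<close> Cons by auto
  qed
qed

lemma closed_reach: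
  assumes "is_tree V E" "a \<in> S" "b \<in> V" "a \<in> V" "\<And>x y. x \<in> S \<Longrightarrow> E x y \<Longrightarrow> y \<in> S"
  shows "b \<in> S"
proof -
  obtain p where "is_walk V E p" "hd p = a" "last p = b"
    using assms(1,3,4) unfolding is_tree_def connected_graph_def by blast
  then show ?thesis using walk_closed[of S E V p] assms by auto
qed

lemma tree_EV: "is_tree V E \<Longrightarrow> E a b \<Longrightarrow> a \<in> V \<and> b \<in> V"
  unfolding is_tree_def simple_graph_def by blast

lemma tree_sym: "is_tree V E \<Longrightarrow> E a b \<Longrightarrow> E b a"
  unfolding is_tree_def simple_graph_def by blast

lemma tree_irr: "is_tree V E \<Longrightarrow> \<not> E a a"
  unfolding is_tree_def simple_graph_def by blast

lemma tree_nocyc: "is_tree V E \<Longrightarrow> is_cycle V E c \<Longrightarrow> False"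
  unfolding is_tree_def acyclic_graph_def by blast

lemma no_tri:
  assumes "is_tree V E" "E a b" "E b c" "E c a" "distinct [a,b,c]"
  shows False
proof -
  have "a \<in> V" "b \<in> V" "c \<in> V" using tree_EV[OF assms(1)] assms by blast+
  then have "is_cycle V E [a,b,c]" using assms
    unfolding is_cycle_def is_path_def by (simp add: walk_Cons2 walk_single)
  then show False using tree_nocyc assms(1) by blast
qed

lemma no_sq:
  assumes "is_tree V E" "E a b" "E b c" "E c d" "E d a" "distinct [a,b,c,d]"
  shows False
proof -
  have "a \<in> V" "b \<in> V" "c \<in> V" "d \<in> V" using tree_EV[OF assms(1)] assms by blast+
  then have "is_cycle V E [a,b,c,d]" using assms
    unfolding is_cycle_def is_path_def by (simp add: walk_Cons2 walk_single)
  then show False using tree_nocyc assms(1) by blast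
qed

lemma no_hex:
  assumes "is_tree V E" "E a b" "E b c" "E c d" "E d e" "E e f" "E f a" "distinct [a,b,c,d,e,f]"
  shows False
proof -
  have "a \<in> V" "b \<in> V" "c \<in> V" "d \<in> V" "e \<in> V" "f \<in> V"
    using tree_EV[OF assms(1)] assms by blast+
  then have "is_cycle V E [a,b,c,d,e,f]" using assms
    unfolding is_cycle_def is_path_def by (simp add: walk_Cons2 walk_single)
  then show False using tree_nocyc assms(1) by blast
qed

lemma eb_card:
  assumes "distinct [u,v,a,b]"
  shows "card (edges_between E {u,v} {a,b}) =
     of_bool (E u a) + of_bool (E v a) + of_bool (E u b) + of_bool (E v b)"
proof -
  have eq: "edges_between E {u,v} {a,b} = (if E u a then {(u,a)} else {}) \<union> (if E v a then {(v,a)} else {})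
     \<union> (if E u b then {(u,b)} else {}) \<union> (if E v b then {(v,b)} else {})"
    by (auto simp: edges_between_def)
  show ?thesis unfolding eq using assms
    by (cases "E u a"; cases "E v a"; cases "E u b"; cases "E v b"; auto simp: card_insert_if)
qed

lemma leaf_by_nbrs:
  assumes "z \<in> V" "{y \<in> V. E z y} = {t}" shows "is_leaf V E z"
  using assms by (simp add: is_leaf_def degree_def)


lemma gdist_le:
  assumes "is_walk V E p" "hd p = a" "last p = b" "length p = Suc k"
  shows "gdist V E a b \<le> k"
  unfolding gdist_def by (rule Least_le) (use assms in blast)

theorem lemma1:
  fixes V :: "'a set" and E :: "'a \<Rightarrow> 'a \<Rightarrow> bool" and u v :: 'a
  assumes "is_tree V E" and "card V \<ge> 4"
    and "u \<in> V" and "v \<in> V" and "u \<noteq> v"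
    and "\<not> Lambda_adj V E u v"
  shows "let
      c1 = (is_leaf V E u \<and> is_leaf V E v \<and>
             (\<exists>w\<in>V. w \<noteq> u \<and> w \<noteq> v \<and> E u w \<and> E v w));
      c2 = (E u v \<and>
             (\<forall>z\<in>V - {u, v}. is_leaf V E z \<and> (E z u \<noteq> E z v)));
      c3 = (gdist V E u v = 3 \<and>
             (\<exists>w x. is_path V E [u, w, x, v] \<and>
                (\<forall>z\<in>V - {u, w, x, v}. is_leaf V E z \<and> (E z u \<noteq> E z v))))
    in (c1 \<or> c2 \<or> c3) \<and> \<not> (c1 \<and> c2) \<and> \<not> (c1 \<and> c3) \<and> \<not> (c2 \<and> c3)"
proof -
  have T: "is_tree V E" by fact
  have fin: "finite V" using T by (simp add: is_tree_def simple_graph_def)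
  note EV = tree_EV[OF T] and sym = tree_sym[OF T] and irr = tree_irr[OF T]
  have uv: "u \<noteq> v" by fact
  define P where "P z \<longleftrightarrow> (E u z \<noteq> E v z)" for z
  have par: "P a = P b" if "a \<in> V - {u,v}" "b \<in> V - {u,v}" "a \<noteq> b" for a b
  proof -
    have "\<not> odd_pair V E {u,v} {a,b}"
      using assms(3-6) unfolding Lambda_adj_def odd_set_def by blast
    moreover have "{u,v} \<subseteq> V" "{a,b} \<subseteq> V" "{u,v} \<inter> {a,b} = {}" "card {u,v} = 2" "card {a,b} = 2"
      using that assms(3-5) by auto
    ultimately have "even (card (edges_between E {u,v} {a,b}))" unfolding odd_pair_def by blast
    moreover have "distinct [u,v,a,b]" using that assms(5) by auto
    ultimately show ?thesis unfolding P_def using eb_card[of u v a b E]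
      by (cases "E u a"; cases "E v a"; cases "E u b"; cases "E v b"; simp)
  qed
  have "V - {u,v} \<noteq> {}"
  proof
    assume "V - {u,v} = {}"
    then have "V \<subseteq> {u,v}" by blast
    then have "card V \<le> card {u,v}" by (simp add: card_mono)
    also have "\<dots> \<le> 2" by (simp add: card_insert_if)
    finally show False using assms(2) by simp
  qed
  then obtain z0 where z0: "z0 \<in> V - {u,v}" by blast
  have allP: "P z = P z0" if "z \<in> V - {u,v}" for z using par[OF that z0] by (cases "z = z0") auto

  let ?c1 = "is_leaf V E u \<and> is_leaf V E v \<and>
             (\<exists>w\<in>V. w \<noteq> u \<and> w \<noteq> v \<and> E u w \<and> E v w)"
  let ?c2 = "E u v \<and>
             (\<forall>z\<in>V - {u, v}. is_leaf V E z \<and> (E z u \<noteq> E z v))"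
  let ?c3 = "gdist V E u v = 3 \<and>
             (\<exists>w x. is_path V E [u, w, x, v] \<and>
                (\<forall>z\<in>V - {u, w, x, v}. is_leaf V E z \<and> (E z u \<noteq> E z v)))"

  have X12: "\<not> (?c1 \<and> ?c2)"
  proof
    assume h: "?c1 \<and> ?c2"
    then obtain w where w: "w \<in> V" "w \<noteq> v" "E u w" by blast
    have "{v,w} \<subseteq> {y \<in> V. E u y}" using w h assms(4) by auto
    then have "card {v,w} \<le> card {y \<in> V. E u y}" by (rule card_mono[rotated]) (use fin in auto)
    moreover have "card {y \<in> V. E u y} = 1" using h by (simp add: is_leaf_def degree_def)
    ultimately show False using w(2) by simp
  qed
  have X13: "\<not> (?c1 \<and> ?c3)"
  proof
    assume h: "?c1 \<and> ?c3"
    then obtain w where w: "w \<in> V" "E u w" "E v w" by blast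
    have "is_walk V E [u,w,v]" using w sym assms(3,4) by (simp add: walk_Cons2 walk_single)
    then have "gdist V E u v \<le> 2" by (rule gdist_le) auto
    then show False using h by simp
  qed
  have X23: "\<not> (?c2 \<and> ?c3)"
  proof
    assume h: "?c2 \<and> ?c3"
    have "is_walk V E [u,v]" using h assms(3,4) by (simp add: walk_Cons2 walk_single)
    then have "gdist V E u v \<le> 1" by (rule gdist_le) auto
    then show False using h by simp
  qed

  have C: "?c1 \<or> ?c2 \<or> ?c3"
  proof (cases "P z0")
    case True
    then have Pz: "E u z \<noteq> E v z" if "z \<in> V - {u,v}" for z using allP[OF that] by (simp add: P_def)
    show ?thesis
    proof (cases "E u v")
      case True
      have "is_leaf V E z \<and> (E z u \<noteq> E z v)" if z: "z \<in> V - {u,v}" for z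
      proof -
        have zz: "E z u \<noteq> E z v" using Pz[OF z] sym by blast
        have zV: "z \<in> V" using z by blast
        show ?thesis
        proof (cases "E u z")
          case True
          have nv: "\<not> E v z" using Pz[OF z] True by blast
          have "y = u" if y: "y \<in> V" "E z y" for y
          proof (rule ccontr)
            assume yu: "y \<noteq> u"
            have "y \<noteq> z" using irr y by blast
            have "y \<noteq> v" using y nv sym by blast
            then have yo: "y \<in> V - {u,v}" using y yu by blast
            show False
            proof (cases "E u y")
              case True
              then show False using no_tri[OF T, of u z y] uv \<open>E u z\<close> y sym \<open>y \<noteq> z\<close> yu z by auto
            next
              case False
              then have "E v y" using Pz[OF yo] by blast
              then show False using no_sq[OF T, of u z y v] uv \<open>E u z\<close> y sym \<open>y \<noteq> z\<close> yu z \<open>E u v\<close> \<open>y \<noteq> v\<close> by auto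
            qed
          qed
          then have "{y \<in> V. E z y} = {u}" using True sym assms(3) by blast
          then show ?thesis using leaf_by_nbrs[OF zV] zz by blast
        next
          case False
          have nv: "E v z" using Pz[OF z] False by blast
          have "y = v" if y: "y \<in> V" "E z y" for y
          proof (rule ccontr)
            assume yu: "y \<noteq> v"
            have "y \<noteq> z" using irr y by blast
            have "y \<noteq> u" using y False sym by blast
            then have yo: "y \<in> V - {u,v}" using y yu by blast
            show False
            proof (cases "E v y")
              case True
              then show False using no_tri[OF T, of v z y] uv nv y sym \<open>y \<noteq> z\<close> yu z by auto
            next
              case False
              then have "E u y" using Pz[OF yo] by blast
              then show False using no_sq[OF T, of v z y u] uv nv y sym \<open>y \<noteq> z\<close> yu z \<open>E u v\<close> \<open>y \<noteq> u\<close> by auto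
            qed
          qed
          then have "{y \<in> V. E z y} = {v}" using nv sym assms(4) by blast
          then show ?thesis using leaf_by_nbrs[OF zV] zz by blast
        qed
      qed
      then show ?thesis using True by blast
    next
      case False
      note nuv = False
      have "\<exists>w x. w \<in> V - {u,v} \<and> x \<in> V - {u,v} \<and> E u w \<and> E v x \<and> E w x"
      proof (rule ccontr)
        assume nex: "\<not> ?thesis"
        let ?S = "{u} \<union> {z \<in> V - {u,v}. E u z}"
        have "v \<in> ?S"
        proof (rule closed_reach[OF T, of u ?S v])
          fix a y assume a: "a \<in> ?S" "E a y"
          show "y \<in> ?S"
          proof (cases "a = u")
            case True
            then show ?thesis using a EV irr nuv by auto
          next
            case False
            then have ao: "a \<in> V - {u,v}" "E u a" using a by auto
            have "y \<noteq> v" using Pz[OF ao(1)] ao(2) a(2) sym by blast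
            moreover have "y \<in> V" using EV a(2) by blast
            moreover have "E u y" if "y \<noteq> u" "y \<noteq> v"
              using Pz[of y] that nex ao a(2) \<open>y \<in> V\<close> by blast
            ultimately show ?thesis by blast
          qed
        qed (use assms(3,4) in auto)
        then show False using uv by auto
      qed
      then obtain w x where wx: "w \<in> V - {u,v}" "x \<in> V - {u,v}" "E u w" "E v x" "E w x" by blast
      have nvw: "\<not> E v w" using Pz[OF wx(1)] wx(3) by blast
      have nux: "\<not> E u x" using Pz[OF wx(2)] wx(4) by blast
      have wnx: "w \<noteq> x" using nvw wx(4) by blast
      have path: "is_path V E [u,w,x,v]"
        using wx wnx assms(3,4) uv sym unfolding is_path_def by (auto simp: walk_Cons2 walk_single)
      have gd: "gdist V E u v = 3"
        unfolding gdist_def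
      proof (rule Least_equality)
        show "\<exists>p. is_walk V E p \<and> hd p = u \<and> last p = v \<and> length p = Suc 3"
          using path unfolding is_path_def by (intro exI[of _ "[u,w,x,v]"]) simp
      next
        fix k assume "\<exists>p. is_walk V E p \<and> hd p = u \<and> last p = v \<and> length p = Suc k"
        then obtain p where p: "is_walk V E p" "hd p = u" "last p = v" "length p = Suc k" by blast
        show "3 \<le> k"
        proof (rule ccontr)
          assume "\<not> 3 \<le> k"
          then have "k = 0 \<or> k = 1 \<or> k = 2" by auto
          then show False
          proof (elim disjE)
            assume "k = 0"
            then obtain a where "p = [a]" using p(4) by (auto simp: length_Suc_conv)
            then show False using p uv by simp
          next
            assume "k = 1"
            then obtain a b where "p = [a,b]" using p(4) by (auto simp: length_Suc_conv numeral_eq_Suc)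
            then show False using p nuv by (simp add: walk_Cons2)
          next
            assume "k = 2"
            then obtain a b c where pe: "p = [a,b,c]" using p(4) by (auto simp: length_Suc_conv numeral_eq_Suc)
            then have "E u b" "E b v" using p by (simp_all add: walk_Cons2)
            then have "b \<in> V - {u,v}" using EV irr by blast
            then show False using Pz \<open>E u b\<close> \<open>E b v\<close> sym by blast
          qed
        qed
      qed
      have "is_leaf V E z \<and> (E z u \<noteq> E z v)" if z: "z \<in> V - {u,w,x,v}" for z
      proof -
        have zo: "z \<in> V - {u,v}" using z by blast
        have zz: "E z u \<noteq> E z v" using Pz[OF zo] sym by blast
        have zV: "z \<in> V" using z by blast
        show ?thesis
        proof (cases "E u z")
          case True
          have nv: "\<not> E v z" using Pz[OF zo] True by blast
          have "y = u" if y: "y \<in> V" "E z y" for y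
          proof (rule ccontr)
            assume yu: "y \<noteq> u"
            have "y \<noteq> z" using irr y by blast
            have "y \<noteq> v" using y nv sym by blast
            have "y \<noteq> w" using no_tri[OF T, of u w z] uv wx y True sym z by auto
            have "y \<noteq> x" using no_sq[OF T, of u w x z] uv wx y True sym z wnx by auto
            have yo: "y \<in> V - {u,v}" using y yu \<open>y \<noteq> v\<close> by blast
            show False
            proof (cases "E u y")
              case True
              then show False using no_tri[OF T, of u z y] uv \<open>E u z\<close> y sym \<open>y \<noteq> z\<close> yu z by auto
            next
              case False
              then have "E v y" using Pz[OF yo] by blast
              then show False using no_hex[OF T, of u z y v x w] uv \<open>E u z\<close> y sym \<open>y \<noteq> z\<close> yu z wx wnx
                  \<open>y \<noteq> v\<close> \<open>y \<noteq> w\<close> \<open>y \<noteq> x\<close> by auto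
            qed
          qed
          then have "{y \<in> V. E z y} = {u}" using True sym assms(3) by blast
          then show ?thesis using leaf_by_nbrs[OF zV] zz by blast
        next
          case False
          have nv: "E v z" using Pz[OF zo] False by blast
          have "y = v" if y: "y \<in> V" "E z y" for y
          proof (rule ccontr)
            assume yu: "y \<noteq> v"
            have "y \<noteq> z" using irr y by blast
            have "y \<noteq> u" using y False sym by blast
            have "y \<noteq> x" using no_tri[OF T, of v x z] uv wx y nv sym z by auto
            have "y \<noteq> w" using no_sq[OF T, of v x w z] uv wx y nv sym z wnx by auto
            have yo: "y \<in> V - {u,v}" using y yu \<open>y \<noteq> u\<close> by blast
            show False
            proof (cases "E v y")
              case True
              then show False using no_tri[OF T, of v z y] uv nv y sym \<open>y \<noteq> z\<close> yu z by auto
            next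
              case False
              then have "E u y" using Pz[OF yo] by blast
              then show False using no_hex[OF T, of v z y u w x] uv nv y sym \<open>y \<noteq> z\<close> yu z wx wnx
                  \<open>y \<noteq> u\<close> \<open>y \<noteq> w\<close> \<open>y \<noteq> x\<close> by auto
            qed
          qed
          then have "{y \<in> V. E z y} = {v}" using nv sym assms(4) by blast
          then show ?thesis using leaf_by_nbrs[OF zV] zz by blast
        qed
      qed
      then have ?c3 using gd path by blast
      then show ?thesis by blast
    qed
  next
    case False
    then have Pz: "E u z = E v z" if "z \<in> V - {u,v}" for z using allP[OF that] by (simp add: P_def)
    have nuv: "\<not> E u v"
    proof
      assume euv: "E u v"
      have nz: "\<not> E u z" if "z \<in> V - {u,v}" for z
      proof
        assume "E u z"
        moreover have "E z u" using sym \<open>E u z\<close> by blast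
        moreover have "E v z" using \<open>E u z\<close> Pz[OF that] by simp
        ultimately show False using no_tri[OF T, of v z u] euv sym[OF euv] that uv by auto
      qed
      have "z0 \<in> {u,v}"
      proof (rule closed_reach[OF T, of u "{u,v}" z0])
        fix a y assume a: "a \<in> {u,v}" "E a y"
        show "y \<in> {u,v}"
        proof (rule ccontr)
          assume "y \<notin> {u,v}"
          then have yo: "y \<in> V - {u,v}" using EV a(2) by blast
          show False using nz[OF yo] Pz[OF yo] a by auto
        qed
      qed (use assms(3) z0 in auto)
      then show False using z0 by blast
    qed
    have "\<exists>w \<in> V - {u,v}. E u w \<and> E v w"
    proof (rule ccontr)
      assume nex: "\<not> ?thesis"
      have "v \<in> {u}"
      proof (rule closed_reach[OF T, of u "{u}" v])
        fix a y assume a: "a \<in> {u}" "E a y"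
        show "y \<in> {u}"
        proof (rule ccontr)
          assume "y \<notin> {u}"
          moreover have "y \<noteq> v" using a nuv by blast
          ultimately have yo: "y \<in> V - {u,v}" using EV a(2) by blast
          show False using nex Pz[OF yo] a yo by auto
        qed
      qed (use assms(3,4) in auto)
      then show False using uv by blast
    qed
    then obtain w where w: "w \<in> V - {u,v}" "E u w" "E v w" by blast
    have "y = w" if y: "y \<in> V" "E u y" for y
    proof (rule ccontr)
      assume "y \<noteq> w"
      have "y \<noteq> u" "y \<noteq> v" using irr nuv y by blast+
      then have "E v y" using Pz y by blast
      moreover have "E w v" "E y u" using sym[OF w(3)] sym[OF y(2)] by auto
      ultimately show False using no_sq[OF T, of u w v y] uv w y \<open>y \<noteq> w\<close> \<open>y \<noteq> u\<close> \<open>y \<noteq> v\<close> by auto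
    qed
    note yw1 = this
    have "{y \<in> V. E u y} = {w}"
    proof (rule set_eqI, rule iffI)
      fix y assume "y \<in> {y \<in> V. E u y}"
      then show "y \<in> {w}" using yw1[of y] by simp
    next
      fix y assume "y \<in> {w}"
      then show "y \<in> {y \<in> V. E u y}" using w by simp
    qed
    then have lu: "is_leaf V E u" by (rule leaf_by_nbrs[OF assms(3)])
    have "y = w" if y: "y \<in> V" "E v y" for y
    proof (rule ccontr)
      assume "y \<noteq> w"
      have "y \<noteq> u" using nuv sym[of v u] y by blast
      have "y \<noteq> v" using irr y by blast
      then have "E u y" using Pz y \<open>y \<noteq> u\<close> by blast
      moreover have "E w u" "E y v" using sym[OF w(2)] sym[OF y(2)] by auto
      ultimately show False using no_sq[OF T, of v w u y] uv w y \<open>y \<noteq> w\<close> \<open>y \<noteq> u\<close> \<open>y \<noteq> v\<close> by auto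
    qed
    note yw2 = this
    have "{y \<in> V. E v y} = {w}"
    proof (rule set_eqI, rule iffI)
      fix y assume "y \<in> {y \<in> V. E v y}"
      then show "y \<in> {w}" using yw2[of y] by simp
    next
      fix y assume "y \<in> {w}"
      then show "y \<in> {y \<in> V. E v y}" using w by simp
    qed
    then have lv: "is_leaf V E v" by (rule leaf_by_nbrs[OF assms(4)])
    have ?c1 using lu lv w by blast
    then show ?thesis by blast
  qed
  show ?thesis unfolding Let_def using C X12 X13 X23 by blast
qed

end
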